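(* Let $X$ be a nonempty countable set, $\mathcal D$ a distribution on $X$, $m\ge1$, $S\sim\mathcal D^m$, and let $g$ be any random variable on the same probability space as $S$ taking values in a finite nonempty set $G$. For $g_0\in G$ with $\Pr[g=g_0]>0$ let $\mathcal D_{\mathrm{goal}}(g_0)=\mathbb E[\mathrm{Unif}(S)\mid g=g_0]$. Then $$\mathbb E_g\big[d_{\mathrm{TV}}(\mathcal D,\mathcal D_{\mathrm{goal}}(g))\big]\le\sqrt{\frac{\ln|G|}{2m}}.$$
   Context: For a tuple $S=(S_1,\dots,S_m)$, $\mathrm{Unif}(S)$ is the law of $S_i$ for $i$ uniform on $[m]$; $\mathbb E[\mathrm{Unif}(S)\mid g=g_0]$ is the corresponding mixture (law of a uniformly random coordinate of $S$ conditioned on $g=g_0$). $d_{\mathrm{TV}}$ is total variation distance. *)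

theory Defs
  imports "HOL-Probability.Probability"
begin

definition dTV :: "'a pmf \<Rightarrow> 'a pmf \<Rightarrow> real" where
  "dTV p q = (SUP A. \<bar>measure_pmf.prob p A - measure_pmf.prob q A\<bar>)"

definition Unif :: "'a list \<Rightarrow> 'a pmf" where
  "Unif S = map_pmf (\<lambda>i. S ! i) (pmf_of_set {..<length S})"

text \<open>J is the joint law of (S, g). D_goal J g0 = E[Unif(S) | g = g0],
  meaningful when Pr[g = g0] > 0.\<close>
definition D_goal :: "('a list \<times> 'g) pmf \<Rightarrow> 'g \<Rightarrow> 'a pmf" where
  "D_goal J g0 = bind_pmf (cond_pmf J {p. snd p = g0}) (\<lambda>p. Unif (fst p))"

end

theory Submission
  imports Defs
begin


lemma pmf_bounded_integrable:
  fixes f :: "'a \<Rightarrow> real"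
  assumes "\<And>x. \<bar>f x\<bar> \<le> B"
  shows "integrable (measure_pmf M) f"
  by (rule measure_pmf.integrable_const_bound[where B=B]) (auto simp: assms)

lemma integral_bind_pmf_bounded:
  fixes f :: "'b \<Rightarrow> real"
  assumes "\<And>x. \<bar>f x\<bar> \<le> B"
  shows "measure_pmf.expectation (bind_pmf M N) f =
         measure_pmf.expectation M (\<lambda>x. measure_pmf.expectation (N x) f)"
  unfolding measure_pmf_bind
  apply (rule integral_bind[where K="count_space UNIV" and B=B and B'=1])
  using assms apply (auto simp: measure_pmf.emeasure_space_1 measure_pmf_in_subprob_algebra)
  done

lemma prob_mono_pointwise:
  assumes "\<And>x. x \<in> B \<Longrightarrow> pmf p x \<le> pmf q x"
  shows "measure_pmf.prob p B \<le> measure_pmf.prob q B"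
proof -
  have "emeasure (measure_pmf p) B \<le> emeasure (measure_pmf q) B"
  proof -
    have "emeasure (measure_pmf p) B = (\<integral>\<^sup>+ x. indicator B x \<partial>measure_pmf p)" by simp
    also have "\<dots> = \<integral>\<^sup>+ x. ennreal (pmf p x) * indicator B x \<partial>count_space UNIV"
      by (rule nn_integral_measure_pmf)
    also have "\<dots> \<le> \<integral>\<^sup>+ x. ennreal (pmf q x) * indicator B x \<partial>count_space UNIV"
      using assms by (intro nn_integral_mono) (auto simp: indicator_def)
    also have "\<dots> = (\<integral>\<^sup>+ x. indicator B x \<partial>measure_pmf q)"
      by (rule nn_integral_measure_pmf[symmetric])
    finally show ?thesis by simp
  qed
  thus ?thesis by (simp add: measure_pmf.emeasure_eq_measure)
qed

lemma dTV_le: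
  fixes p q :: "'a pmf"
  shows "dTV p q \<le> measure_pmf.prob q {x. pmf p x < pmf q x} - measure_pmf.prob p {x. pmf p x < pmf q x}"
proof -
  define B where "B = {x. pmf p x < pmf q x}"
  have key: "measure_pmf.prob q A - measure_pmf.prob p A \<le> measure_pmf.prob q B - measure_pmf.prob p B" for A
  proof -
    have a1: "measure_pmf.prob q A = measure_pmf.prob q (A \<inter> B) + measure_pmf.prob q (A - B)"
      by (metis Diff_Int_distrib2 Int_Diff_Un Int_Diff_disjoint measure_pmf.finite_measure_Union sets_measure_pmf UNIV_I Un_commute)
    have a2: "measure_pmf.prob p A = measure_pmf.prob p (A \<inter> B) + measure_pmf.prob p (A - B)"
      by (metis Diff_Int_distrib2 Int_Diff_Un Int_Diff_disjoint measure_pmf.finite_measure_Union sets_measure_pmf UNIV_I Un_commute)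
    have b1: "measure_pmf.prob q B = measure_pmf.prob q (A \<inter> B) + measure_pmf.prob q (B - A)"
      by (metis Int_Diff_Un Int_Diff_disjoint Int_commute measure_pmf.finite_measure_Union sets_measure_pmf UNIV_I)
    have b2: "measure_pmf.prob p B = measure_pmf.prob p (A \<inter> B) + measure_pmf.prob p (B - A)"
      by (metis Int_Diff_Un Int_Diff_disjoint Int_commute measure_pmf.finite_measure_Union sets_measure_pmf UNIV_I)
    have c1: "measure_pmf.prob q (A - B) \<le> measure_pmf.prob p (A - B)"
      by (rule prob_mono_pointwise) (auto simp: B_def)
    have c2: "measure_pmf.prob p (B - A) \<le> measure_pmf.prob q (B - A)"
      by (rule prob_mono_pointwise) (auto simp: B_def)
    show ?thesis using a1 a2 b1 b2 c1 c2 by linarith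
  qed
  have "\<bar>measure_pmf.prob p A - measure_pmf.prob q A\<bar> \<le> measure_pmf.prob q B - measure_pmf.prob p B" for A
  proof -
    have "measure_pmf.prob p A - measure_pmf.prob q A = measure_pmf.prob q (-A) - measure_pmf.prob p (-A)"
      using measure_pmf.prob_compl[of A q] measure_pmf.prob_compl[of A p]
      by (simp add: Compl_eq_Diff_UNIV)
    thus ?thesis using key[of A] key[of "-A"] by linarith
  qed
  thus ?thesis unfolding dTV_def B_def by (intro cSUP_least) auto
qed



lemma map_replicate_pmf: "map_pmf (map f) (replicate_pmf n p) = replicate_pmf n (map_pmf f p)"
proof (induction n)
  case (Suc n)
  have "replicate_pmf (Suc n) (map_pmf f p) = map_pmf f p \<bind> (\<lambda>x. map_pmf (map f) (replicate_pmf n p) \<bind> (\<lambda>xs. return_pmf (x # xs)))"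
    by (simp only: replicate_pmf.simps Suc.IH)
  also have "\<dots> = map_pmf (map f) (replicate_pmf (Suc n) p)"
    unfolding bind_map_pmf by (simp add: map_pmf_def bind_assoc_pmf bind_return_pmf)
  finally show ?case by simp
qed (simp)

lemma map_pmf_mem_bernoulli:
  "map_pmf (\<lambda>x. x \<in> A) D = bernoulli_pmf (measure_pmf.prob D A)"
proof (rule pmf_eqI)
  fix b :: bool
  have c: "measure_pmf.prob D (-A) = 1 - measure_pmf.prob D A"
    using measure_pmf.prob_compl[of A D] by (simp add: Compl_eq_Diff_UNIV)
  have "(\<lambda>x. x \<in> A) -` {True} = A" "(\<lambda>x. x \<in> A) -` {False} = -A" by auto
  thus "pmf (map_pmf (\<lambda>x. x \<in> A) D) b = pmf (bernoulli_pmf (measure_pmf.prob D A)) b"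
    using c by (cases b) (simp_all add: pmf_map)
qed

lemma map_cnt_binomial:
  "map_pmf (\<lambda>S. length (filter (\<lambda>x. x \<in> A) S)) (replicate_pmf n D)
     = binomial_pmf n (measure_pmf.prob D A)"
proof -
  have "binomial_pmf n (measure_pmf.prob D A)
      = map_pmf (length \<circ> filter id) (replicate_pmf n (map_pmf (\<lambda>x. x \<in> A) D))"
    by (subst binomial_pmf_altdef) (auto simp: map_pmf_mem_bernoulli)
  also have "\<dots> = map_pmf (length \<circ> filter id) (map_pmf (map (\<lambda>x. x \<in> A)) (replicate_pmf n D))"
    by (simp add: map_replicate_pmf)
  also have "\<dots> = map_pmf (\<lambda>S. length (filter (\<lambda>x. x \<in> A) S)) (replicate_pmf n D)"
    by (simp add: pmf.map_comp o_def filter_map)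
  finally show ?thesis by simp
qed

lemma binomial_mgf:
  assumes p: "p \<in> {0..1}"
  shows "measure_pmf.expectation (binomial_pmf n p) (\<lambda>k. exp (t * real k))
         = (1 - p + p * exp t) ^ n"
proof -
  have "measure_pmf.expectation (binomial_pmf n p) (\<lambda>k. exp (t * real k))
      = (\<Sum>k\<in>{..n}. pmf (binomial_pmf n p) k *\<^sub>R exp (t * real k))"
    using p by (intro integral_measure_pmf) (auto simp: set_pmf_binomial_eq split: if_splits)
  also have "\<dots> = (\<Sum>k\<le>n. real (n choose k) * (p * exp t) ^ k * (1 - p) ^ (n - k))"
    using p by (intro sum.cong refl)
      (simp add: pmf_binomial power_mult_distrib mult_ac exp_of_nat_mult[symmetric])
  also have "\<dots> = (p * exp t + (1 - p)) ^ n"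
    by (subst binomial_ring) (simp add: mult_ac)
  finally show ?thesis by (simp add: add_ac)
qed

lemma hoeffding_bern:
  fixes p t :: real
  assumes "p \<in> {0..1}" "t \<ge> 0"
  shows "(1 - p + p * exp t) * exp (- t * p) \<le> exp (t\<^sup>2 / 8)"
proof -
  define X where "X = 1 + p * (exp t - 1)"
  have e1: "exp t - 1 \<ge> 0" using assms(2) by simp
  have "p * (exp t - 1) \<ge> 0" using assms(1) e1 by (intro mult_nonneg_nonneg) auto
  hence pos: "X > 0" unfolding X_def by linarith
  have "-t * p + ln X \<le> t\<^sup>2 / 8"
    unfolding X_def using Hoeffdings_lemma_aux[of t p] assms by simp
  hence "exp (-t * p + ln X) \<le> exp (t\<^sup>2 / 8)" by (simp only: exp_le_cancel_iff)
  moreover have "exp (-t * p + ln X) = exp (- t * p) * X"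
    using pos by (simp only: exp_add exp_ln)
  moreover have "1 - p + p * exp t = X" by (simp add: X_def algebra_simps)
  ultimately show ?thesis by (metis mult.commute)
qed

lemma binomial_centered_mgf:
  assumes p: "p \<in> {0..1}" and m: "m \<ge> 1" and l: "l \<ge> 0"
  shows "measure_pmf.expectation (binomial_pmf m p) (\<lambda>k. exp (l * (real k / real m - p)))
         \<le> exp (l\<^sup>2 / (8 * real m))"
proof -
  define t where "t = l / real m"
  have t0: "t \<ge> 0" using l by (simp add: t_def)
  have eq: "exp (l * (real k / real m - p)) = exp (- (l * p)) * exp (t * real k)" for k
    using m by (simp add: t_def exp_add[symmetric] algebra_simps)
  have "measure_pmf.expectation (binomial_pmf m p) (\<lambda>k. exp (l * (real k / real m - p)))
      = exp (- (l * p)) * (1 - p + p * exp t) ^ m"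
    unfolding eq by (simp add: binomial_mgf[OF p])
  also have "exp (- (l * p)) = exp (- t * p) ^ m"
  proof -
    have "exp (- t * p) ^ m = exp (real m * (- t * p))" by (simp only: exp_of_nat_mult)
    also have "real m * (- t * p) = - (l * p)" using m by (simp add: t_def)
    finally show ?thesis by simp
  qed
  also have "exp (- t * p) ^ m * (1 - p + p * exp t) ^ m = ((1 - p + p * exp t) * exp (- t * p)) ^ m"
    by (simp add: power_mult_distrib mult_ac)
  also have "\<dots> \<le> exp (t\<^sup>2 / 8) ^ m"
  proof (rule power_mono[OF hoeffding_bern[OF p t0]])
    have "1 - p + p * exp t \<ge> 0" using p by (simp add: add_nonneg_nonneg)
    thus "0 \<le> (1 - p + p * exp t) * exp (- t * p)" by simp
  qed
  also have "\<dots> = exp (l\<^sup>2 / (8 * real m))"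
  proof -
    have "exp (t\<^sup>2 / 8) ^ m = exp (real m * (t\<^sup>2 / 8))" by (simp only: exp_of_nat_mult)
    also have "real m * (t\<^sup>2 / 8) = l\<^sup>2 / (8 * real m)"
      using m by (simp add: t_def power2_eq_square field_simps)
    finally show ?thesis .
  qed
  finally show ?thesis .
qed



lemma Unif_prob:
  assumes "length S = m" "m \<ge> 1"
  shows "measure_pmf.prob (Unif S) A = real (length (filter (\<lambda>x. x \<in> A) S)) / real m"
proof -
  have ne: "{..<length S} \<noteq> {}" using assms by (simp add: lessThan_empty_iff)
  have "{..<length S} \<inter> (\<lambda>i. S ! i) -` A = {i. i < length S \<and> S ! i \<in> A}" by auto
  thus ?thesis unfolding Unif_def using ne assms
    by (simp add: measure_pmf_of_set length_filter_conv_card)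
qed

lemma prob_Z_bound: "\<bar>measure_pmf.prob (Unif S) A - measure_pmf.prob D A\<bar> \<le> 1"
  using measure_pmf.prob_le_1[of "Unif S" A] measure_pmf.prob_le_1[of D A]
    measure_nonneg[of "measure_pmf (Unif S)" A] measure_nonneg[of "measure_pmf D" A] by linarith

lemma mgf_Z:
  assumes m: "m \<ge> 1" and l: "l \<ge> 0"
  shows "measure_pmf.expectation (replicate_pmf m D)
           (\<lambda>S. exp (l * (measure_pmf.prob (Unif S) A - measure_pmf.prob D A)))
         \<le> exp (l\<^sup>2 / (8 * real m))"
proof -
  let ?p = "measure_pmf.prob D A"
  have "measure_pmf.expectation (replicate_pmf m D)
           (\<lambda>S. exp (l * (measure_pmf.prob (Unif S) A - ?p)))
      = measure_pmf.expectation (replicate_pmf m D)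
           (\<lambda>S. exp (l * (real (length (filter (\<lambda>x. x \<in> A) S)) / real m - ?p)))"
    using m by (intro integral_cong_AE) (auto simp: AE_measure_pmf_iff set_replicate_pmf Unif_prob)
  also have "\<dots> = measure_pmf.expectation (map_pmf (\<lambda>S. length (filter (\<lambda>x. x \<in> A) S)) (replicate_pmf m D))
           (\<lambda>k. exp (l * (real k / real m - ?p)))"
    by simp
  also have "\<dots> = measure_pmf.expectation (binomial_pmf m ?p) (\<lambda>k. exp (l * (real k / real m - ?p)))"
    by (simp only: map_cnt_binomial)
  also have "\<dots> \<le> exp (l\<^sup>2 / (8 * real m))"
    by (rule binomial_centered_mgf[OF _ m l]) (auto simp: measure_nonneg)
  finally show ?thesis .
qed

lemma max_bound:
  fixes D :: "'x pmf" and As :: "'g \<Rightarrow> 'x set" and G :: "'g set"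
  assumes m: "m \<ge> 1" and fin: "finite G" and ne: "G \<noteq> {}"
  defines "W \<equiv> \<lambda>S. Max ((\<lambda>g. measure_pmf.prob (Unif S) (As g) - measure_pmf.prob D (As g)) ` G)"
  shows "measure_pmf.expectation (replicate_pmf m D) W \<le> sqrt (ln (real (card G)) / (2 * real m))"
proof -
  define R where "R = replicate_pmf m D"
  define Z where "Z = (\<lambda>g S. measure_pmf.prob (Unif S) (As g) - measure_pmf.prob D (As g))"
  have WZ: "\<exists>g\<in>G. W S = Z g S" for S
  proof -
    have "W S \<in> (\<lambda>g. Z g S) ` G" unfolding W_def Z_def using fin ne by (intro Max_in) auto
    thus ?thesis by auto
  qed
  have Wb: "\<bar>W S\<bar> \<le> 1" for S using WZ[of S] prob_Z_bound unfolding Z_def by auto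
  define E where "E = measure_pmf.expectation R W"
  have main: "l * E \<le> ln (real (card G)) + l\<^sup>2 / (8 * real m)" if l: "l > 0" for l
  proof -
    define M where "M = measure_pmf.expectation R (\<lambda>S. exp (l * W S))"
    have intW: "integrable (measure_pmf R) W" by (rule pmf_bounded_integrable[where B=1]) (rule Wb)
    have expb: "\<bar>exp (l * W S)\<bar> \<le> exp l" for S
      using Wb[of S] l by (auto simp: abs_le_iff intro: mult_left_le)
    have intE: "integrable (measure_pmf R) (\<lambda>S. exp (l * W S))"
      by (rule pmf_bounded_integrable[where B="exp l"]) (rule expb)
    have expZb: "\<bar>exp (l * Z g S)\<bar> \<le> exp l" for g S
      using prob_Z_bound[of S "As g" D] l unfolding Z_def by (auto simp: abs_le_iff intro: mult_left_le)
    have intZ: "integrable (measure_pmf R) (\<lambda>S. exp (l * Z g S))" for g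
      by (rule pmf_bounded_integrable[where B="exp l"]) (rule expZb)
    have "M \<le> measure_pmf.expectation R (\<lambda>S. \<Sum>g\<in>G. exp (l * Z g S))"
      unfolding M_def
    proof (intro integral_mono intE Bochner_Integration.integrable_sum intZ)
      fix S
      obtain g where g: "g \<in> G" "W S = Z g S" using WZ by blast
      show "exp (l * W S) \<le> (\<Sum>g\<in>G. exp (l * Z g S))"
        using g fin by (auto intro: member_le_sum)
    qed
    also have "\<dots> = (\<Sum>g\<in>G. measure_pmf.expectation R (\<lambda>S. exp (l * Z g S)))"
      by (intro Bochner_Integration.integral_sum intZ)
    also have "\<dots> \<le> (\<Sum>g\<in>G. exp (l\<^sup>2 / (8 * real m)))"
      unfolding R_def Z_def using l by (intro sum_mono mgf_Z[OF m]) auto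
    also have "\<dots> = real (card G) * exp (l\<^sup>2 / (8 * real m))" by simp
    finally have Mle: "M \<le> real (card G) * exp (l\<^sup>2 / (8 * real m))" .
    have Mpos: "M > 0"
    proof -
      have "measure_pmf.expectation R (\<lambda>S. exp (-l)) \<le> M"
        unfolding M_def
      proof (intro integral_mono intE)
        fix S have "l * (-1) \<le> l * W S" using Wb[of S] l by (intro mult_left_mono) auto
        thus "exp (- l) \<le> exp (l * W S)" by simp
      qed simp
      hence "exp (- l) \<le> M" by (simp add: measure_pmf.prob_space)
      thus ?thesis using exp_gt_zero[of "-l"] by linarith
    qed
    have pt: "l * W S \<le> exp (l * W S) / M + ln M - 1" for S
    proof -
      have "1 + (l * W S - ln M) \<le> exp (l * W S - ln M)" by (rule exp_ge_add_one_self)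
      also have "\<dots> = exp (l * W S) / M" using Mpos by (simp add: exp_diff)
      finally show ?thesis by simp
    qed
    have "l * E = measure_pmf.expectation R (\<lambda>S. l * W S)" unfolding E_def by simp
    also have "\<dots> \<le> measure_pmf.expectation R (\<lambda>S. exp (l * W S) / M + ln M - 1)"
      by (intro integral_mono pt Bochner_Integration.integrable_diff Bochner_Integration.integrable_add
          integrable_divide intE integrable_mult_right intW) auto
    also have "\<dots> = M / M + ln M - 1"
      using intE by (simp add: M_def Bochner_Integration.integral_diff Bochner_Integration.integral_add
          measure_pmf.prob_space)
    also have "\<dots> = ln M" using Mpos by simp
    also have "\<dots> \<le> ln (real (card G) * exp (l\<^sup>2 / (8 * real m)))"
      using Mpos Mle by simp
    also have "\<dots> = ln (real (card G)) + l\<^sup>2 / (8 * real m)"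
      using fin ne by (simp add: ln_mult card_gt_0_iff)
    finally show ?thesis .
  qed
  have "E \<le> sqrt (ln (real (card G)) / (2 * real m))"
  proof (cases "E \<le> 0")
    case True
    have "card G \<ge> 1" using fin ne by (simp add: Suc_le_eq card_gt_0_iff)
    hence "ln (real (card G)) \<ge> 0" by simp
    hence "ln (real (card G)) / (2 * real m) \<ge> 0" by simp
    hence "sqrt (ln (real (card G)) / (2 * real m)) \<ge> 0" by simp
    thus ?thesis using True by linarith
  next
    case False
    hence Ep: "E > 0" by simp
    have "4 * real m * E * E \<le> ln (real (card G)) + (4 * real m * E)\<^sup>2 / (8 * real m)"
      using main[of "4 * real m * E"] Ep m by simp
    also have "(4 * real m * E)\<^sup>2 / (8 * real m) = 2 * real m * E * E"
      using m by (simp add: power2_eq_square field_simps)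
    finally have "2 * real m * E\<^sup>2 \<le> ln (real (card G))" by (simp add: power2_eq_square mult_ac)
    hence "E\<^sup>2 \<le> ln (real (card G)) / (2 * real m)" using m by (simp add: field_simps mult_ac)
    thus ?thesis by (rule real_le_rsqrt)
  qed
  thus ?thesis unfolding E_def R_def .
qed



theorem mainTheorem7:
  fixes D :: "'x::countable pmf" and J :: "('x list \<times> 'g) pmf"
    and m :: nat and G :: "'g set"
  assumes "m \<ge> 1"
    and "finite G" and "G \<noteq> {}"
    and "map_pmf fst J = replicate_pmf m D"
    and "set_pmf (map_pmf snd J) \<subseteq> G"
  shows "measure_pmf.expectation (map_pmf snd J) (\<lambda>g0. dTV D (D_goal J g0))
           \<le> sqrt (ln (real (card G)) / (2 * real m))"
proof -
  note m = assms(1) and fin = assms(2) and ne = assms(3) and JR = assms(4) and PG = assms(5)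
  define P where "P = map_pmf snd J"
  define C where "C = (\<lambda>g0. cond_pmf J {p. snd p = g0})"
  define As where "As = (\<lambda>g0. {x. pmf D x < pmf (D_goal J g0) x})"
  define W where "W = (\<lambda>S. Max ((\<lambda>g. measure_pmf.prob (Unif S) (As g) - measure_pmf.prob D (As g)) ` G))"
  have Wb: "\<bar>W S\<bar> \<le> 1" for S
  proof -
    have "W S \<in> (\<lambda>g. measure_pmf.prob (Unif S) (As g) - measure_pmf.prob D (As g)) ` G"
      unfolding W_def using fin ne by (intro Max_in) auto
    thus ?thesis using prob_Z_bound by auto
  qed
  have setC: "set_pmf (C g0) = set_pmf J \<inter> {p. snd p = g0}" if "g0 \<in> set_pmf P" for g0
  proof -
    have "set_pmf J \<inter> {p. snd p = g0} \<noteq> {}" using that by (auto simp: P_def)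
    thus ?thesis unfolding C_def by (rule set_cond_pmf)
  qed
  have lenJ: "length (fst p) = m" if "p \<in> set_pmf J" for p
  proof -
    have "fst p \<in> set_pmf (map_pmf fst J)" using that by simp
    thus ?thesis unfolding JR by (simp add: set_replicate_pmf)
  qed
  have step: "dTV D (D_goal J g0) \<le> measure_pmf.expectation (C g0) (\<lambda>p. W (fst p))"
    if g0: "g0 \<in> set_pmf P" for g0
  proof -
    have "dTV D (D_goal J g0) \<le> measure_pmf.prob (D_goal J g0) (As g0) - measure_pmf.prob D (As g0)"
      unfolding As_def by (rule dTV_le)
    also have "measure_pmf.prob (D_goal J g0) (As g0)
        = measure_pmf.expectation (D_goal J g0) (indicator (As g0))"
      by simp
    also have "\<dots> = measure_pmf.expectation (C g0) (\<lambda>p. measure_pmf.expectation (Unif (fst p)) (indicator (As g0)))"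
      unfolding D_goal_def C_def by (rule integral_bind_pmf_bounded[where B=1]) (auto simp: indicator_def)
    also have "\<dots> = measure_pmf.expectation (C g0) (\<lambda>p. measure_pmf.prob (Unif (fst p)) (As g0))"
      by simp
    also have "\<dots> - measure_pmf.prob D (As g0)
        = measure_pmf.expectation (C g0) (\<lambda>p. measure_pmf.prob (Unif (fst p)) (As g0) - measure_pmf.prob D (As g0))"
      by (subst Bochner_Integration.integral_diff)
         (auto intro!: pmf_bounded_integrable[where B=1] simp: measure_pmf.prob_space)
    also have "\<dots> \<le> measure_pmf.expectation (C g0) (\<lambda>p. W (fst p))"
    proof (rule integral_mono_AE)
      show "integrable (measure_pmf (C g0)) (\<lambda>p. measure_pmf.prob (Unif (fst p)) (As g0) - measure_pmf.prob D (As g0))"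
        by (rule pmf_bounded_integrable[where B=1]) (rule prob_Z_bound)
      show "integrable (measure_pmf (C g0)) (\<lambda>p. W (fst p))"
        by (rule pmf_bounded_integrable[where B=1]) (rule Wb)
      have "g0 \<in> G" using g0 PG by (auto simp: P_def)
      thus "AE p in measure_pmf (C g0). measure_pmf.prob (Unif (fst p)) (As g0) - measure_pmf.prob D (As g0) \<le> W (fst p)"
        unfolding W_def using fin by (intro AE_pmfI Max_ge) auto
    qed
    finally show ?thesis .
  qed
  have "measure_pmf.expectation P (\<lambda>g0. dTV D (D_goal J g0))
      \<le> measure_pmf.expectation P (\<lambda>g0. measure_pmf.expectation (C g0) (\<lambda>p. W (fst p)))"
  proof (rule integral_mono_AE)
    have finP: "finite (set_pmf P)" using PG fin by (auto simp: P_def intro: finite_subset)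
    show "integrable (measure_pmf P) (\<lambda>g0. dTV D (D_goal J g0))"
      by (rule integrable_measure_pmf_finite[OF finP])
    show "integrable (measure_pmf P) (\<lambda>g0. measure_pmf.expectation (C g0) (\<lambda>p. W (fst p)))"
      by (rule integrable_measure_pmf_finite[OF finP])
    show "AE g0 in measure_pmf P. dTV D (D_goal J g0) \<le> measure_pmf.expectation (C g0) (\<lambda>p. W (fst p))"
      by (intro AE_pmfI step)
  qed
  also have "\<dots> = measure_pmf.expectation (bind_pmf P C) (\<lambda>p. W (fst p))"
    by (rule integral_bind_pmf_bounded[where B=1, symmetric]) (rule Wb)
  also have "bind_pmf P C = J"
    unfolding P_def C_def
  proof (rule bind_cond_pmf_cancel)
    fix x assume "x \<in> set_pmf (map_pmf snd J)"
    thus "set_pmf J \<inter> {y. snd y = x} \<noteq> {}" by auto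
  next
    fix y assume "y \<in> set_pmf J"
    thus "set_pmf (map_pmf snd J) \<inter> {x. snd y = x} \<noteq> {}" by auto
  next
    fix x :: 'g and y :: "'x list \<times> 'g" assume "snd y = x"
    thus "measure_pmf.prob J {y. snd y = x} = measure_pmf.prob (map_pmf snd J) {x. snd y = x}"
      by (simp add: vimage_def eq_commute)
  qed
  also have "measure_pmf.expectation J (\<lambda>p. W (fst p)) = measure_pmf.expectation (map_pmf fst J) W"
    by simp
  also have "\<dots> \<le> sqrt (ln (real (card G)) / (2 * real m))"
    unfolding JR W_def by (rule max_bound[OF m fin ne])
  finally show ?thesis unfolding P_def .
qed


end
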